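(* Let $G$ be a finite connected graph with at least one edge and let $\phi$ be an order map for $G$. Then $\phi$ is tree-compatible if and only if for all spanning trees $T,T'$ of $G$ and every $k\in\{0,\dots,|E(G)|-1\}$, $$T\cap\{\phi_1(T),\dots,\phi_k(T)\}=T'\cap\{\phi_1(T),\dots,\phi_k(T)\}\ \Longrightarrow\ \forall j\in\{1,\dots,k+1\},\ \phi_j(T)=\phi_j(T').$$
   Context: An order map assigns to each spanning tree $T$ of $G$ a total order $\phi(T)$ on $E(G)$; $\phi_k(T)$ denotes the $k$-th smallest edge for $\phi(T)$. Let $m=|E(G)|$. A decision tree is a perfect binary tree of depth $m-1$ whose nodes are labelled by edges of $G$ so that along every root-to-leaf path the labels form a permutation of $E(G)$. For a spanning tree $T$, walk down the decision tree from the root: at each node, if its label is not in $T$ go to the left child, otherwise go to the right child; the sequence of labels $e_1,\dots,e_m$ met defines the $(\Delta,T)$-ordering $e_1<\dots<e_m$. The order map $\phi$ is tree-compatible if there exists a decision tree $\Delta$ such that for every spanning tree $T$ the $(\Delta,T)$-ordering coincides with $\phi(T)$. *)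

theory Defs
  imports Main "HOL-Library.Tree"
begin

text \<open>A finite (multi)graph: vertex set V, edge set E, and an endpoint map
  giving each edge its set of one (loop) or two endpoints.\<close>
definition graph :: "'v set \<Rightarrow> 'e set \<Rightarrow> ('e \<Rightarrow> 'v set) \<Rightarrow> bool" where
  "graph V E ends \<longleftrightarrow> finite V \<and> finite E \<and>
     (\<forall>e\<in>E. ends e \<subseteq> V \<and> 1 \<le> card (ends e) \<and> card (ends e) \<le> 2)"

definition adj :: "('e \<Rightarrow> 'v set) \<Rightarrow> 'e set \<Rightarrow> 'v \<Rightarrow> 'v \<Rightarrow> bool" where
  "adj ends F u v \<longleftrightarrow> (\<exists>e\<in>F. ends e = {u, v})"

definition reach :: "('e \<Rightarrow> 'v set) \<Rightarrow> 'e set \<Rightarrow> 'v \<Rightarrow> 'v \<Rightarrow> bool" where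
  "reach ends F = (adj ends F)\<^sup>*\<^sup>*"

definition connected_graph :: "'v set \<Rightarrow> 'e set \<Rightarrow> ('e \<Rightarrow> 'v set) \<Rightarrow> bool" where
  "connected_graph V E ends \<longleftrightarrow> (\<forall>u\<in>V. \<forall>v\<in>V. reach ends E u v)"

text \<open>Spanning tree: a set of edges connecting all vertices and acyclic
  (every edge is a bridge, which also excludes loops).\<close>
definition spanning_tree :: "'v set \<Rightarrow> 'e set \<Rightarrow> ('e \<Rightarrow> 'v set) \<Rightarrow> 'e set \<Rightarrow> bool" where
  "spanning_tree V E ends T \<longleftrightarrow> T \<subseteq> E \<and> connected_graph V T ends \<and>
     (\<forall>e\<in>T. \<forall>u v. ends e = {u, v} \<longrightarrow> \<not> reach ends (T - {e}) u v)"

text \<open>An order map assigns to every spanning tree a total order on E,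
  represented as a list enumerating E in increasing order; phi_k(T) = phi T ! (k-1).\<close>
definition order_map :: "'v set \<Rightarrow> 'e set \<Rightarrow> ('e \<Rightarrow> 'v set) \<Rightarrow> ('e set \<Rightarrow> 'e list) \<Rightarrow> bool" where
  "order_map V E ends phi \<longleftrightarrow>
     (\<forall>T. spanning_tree V E ends T \<longrightarrow> distinct (phi T) \<and> set (phi T) = E)"

fun paths :: "'e tree \<Rightarrow> 'e list set" where
  "paths Leaf = {[]}"
| "paths (Node l e r) = (\<lambda>p. e # p) ` (paths l \<union> paths r)"

text \<open>Decision tree: perfect binary tree of depth m-1 (i.e. height m) whose
  root-to-leaf label sequences are permutations of E.\<close>
definition decision_tree :: "'e set \<Rightarrow> 'e tree \<Rightarrow> bool" where
  "decision_tree E t \<longleftrightarrow> complete t \<and> height t = card E \<and>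
     (\<forall>p\<in>paths t. distinct p \<and> set p = E)"

fun dt_ordering :: "'e tree \<Rightarrow> 'e set \<Rightarrow> 'e list" where
  "dt_ordering Leaf T = []"
| "dt_ordering (Node l e r) T = e # dt_ordering (if e \<in> T then r else l) T"

definition tree_compatible :: "'v set \<Rightarrow> 'e set \<Rightarrow> ('e \<Rightarrow> 'v set) \<Rightarrow> ('e set \<Rightarrow> 'e list) \<Rightarrow> bool" where
  "tree_compatible V E ends phi \<longleftrightarrow>
     (\<exists>t. decision_tree E t \<and> (\<forall>T. spanning_tree V E ends T \<longrightarrow> dt_ordering t T = phi T))"

end

theory Submission
  imports Defs
begin

lemma dt_len: "complete t \<Longrightarrow> length (dt_ordering t T) = height t"
  by (induction t) auto

lemma dt_agree:
  "complete t \<Longrightarrow> k < height t \<Longrightarrow>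
   T \<inter> set (take k (dt_ordering t T)) = T' \<inter> set (take k (dt_ordering t T)) \<Longrightarrow>
   take (Suc k) (dt_ordering t T) = take (Suc k) (dt_ordering t T')"
proof (induction t arbitrary: k)
  case Leaf
  then show ?case by simp
next
  case (Node l e r)
  show ?case
  proof (cases k)
    case 0
    then show ?thesis by simp
  next
    case (Suc k')
    define s where "s = (if e \<in> T then r else l)"
    have dT: "dt_ordering (Node l e r) T = e # dt_ordering s T" by (simp add: s_def)
    have eq: "(e \<in> T) = (e \<in> T')" using Node.prems(3) Suc dT by auto
    have dT': "dt_ordering (Node l e r) T' = e # dt_ordering s T'" using eq by (simp add: s_def)
    have cs: "complete s" and hs: "k' < height s"
      using Node.prems(1,2) Suc by (auto simp: s_def)
    have "T \<inter> set (take k' (dt_ordering s T)) = T' \<inter> set (take k' (dt_ordering s T))"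
      using Node.prems(3) Suc dT by auto
    then have "take (Suc k') (dt_ordering s T) = take (Suc k') (dt_ordering s T')"
      using Node.IH cs hs by (auto simp: s_def split: if_splits)
    then show ?thesis using dT dT' Suc by simp
  qed
qed

definition lab :: "'v set \<Rightarrow> 'e set \<Rightarrow> ('e \<Rightarrow> 'v set) \<Rightarrow> ('e set \<Rightarrow> 'e list) \<Rightarrow> 'e list \<Rightarrow> 'e set \<Rightarrow> 'e" where
  "lab V E ends phi p I = (if \<exists>T. spanning_tree V E ends T \<and> take (length p) (phi T) = p \<and> T \<inter> set p = I
     then phi (SOME T. spanning_tree V E ends T \<and> take (length p) (phi T) = p \<and> T \<inter> set p = I) ! length p
     else (SOME e. e \<in> E - set p))"

fun build :: "'v set \<Rightarrow> 'e set \<Rightarrow> ('e \<Rightarrow> 'v set) \<Rightarrow> ('e set \<Rightarrow> 'e list) \<Rightarrow> nat \<Rightarrow> 'e list \<Rightarrow> 'e set \<Rightarrow> 'e tree" where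
  "build V E ends phi 0 p I = Leaf"
| "build V E ends phi (Suc n) p I = (let e = lab V E ends phi p I in
     Node (build V E ends phi n (p @ [e]) I) e (build V E ends phi n (p @ [e]) (insert e I)))"

lemma build_complete: "complete (build V E ends phi n p I) \<and> height (build V E ends phi n p I) = n"
  by (induction n arbitrary: p I) (auto simp: Let_def)

lemma lab_in:
  assumes om: "order_map V E ends phi" and fin: "finite E"
    and "distinct p" "set p \<subseteq> E" "length p < card E"
  shows "lab V E ends phi p I \<in> E - set p"
proof (cases "\<exists>T. spanning_tree V E ends T \<and> take (length p) (phi T) = p \<and> T \<inter> set p = I")
  case True
  define T where "T = (SOME T. spanning_tree V E ends T \<and> take (length p) (phi T) = p \<and> T \<inter> set p = I)"
  have T: "spanning_tree V E ends T \<and> take (length p) (phi T) = p \<and> T \<inter> set p = I"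
    unfolding T_def by (rule someI_ex[OF True])
  have d: "distinct (phi T)" "set (phi T) = E" using om T unfolding order_map_def by auto
  have len: "length (phi T) = card E" using d distinct_card by fastforce
  have l: "lab V E ends phi p I = phi T ! length p" using True by (simp add: lab_def T_def)
  have "phi T ! length p \<in> E" using d len assms(5) nth_mem by fastforce
  moreover have "phi T ! length p \<notin> set p"
  proof
    assume "phi T ! length p \<in> set p"
    then obtain i where i: "i < length p" "p ! i = phi T ! length p" by (auto simp: in_set_conv_nth)
    then have "phi T ! i = phi T ! length p" using T by (metis nth_take)
    then show False using d(1) len assms(5) i(1) by (simp add: nth_eq_iff_index_eq)
  qed
  ultimately show ?thesis using l by simp
next
  case False
  have "card (set p) < card E" using assms distinct_card by metis
  then have "E - set p \<noteq> {}" using assms(4) by auto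
  then obtain x where "x \<in> E - set p" by blast
  then have "(SOME e. e \<in> E - set p) \<in> E - set p" by (rule someI)
  moreover have "lab V E ends phi p I = (SOME e. e \<in> E - set p)"
    using False unfolding lab_def by (simp only: if_False)
  ultimately show ?thesis by simp
qed

lemma build_paths:
  assumes om: "order_map V E ends phi" and fin: "finite E"
  shows "distinct p \<Longrightarrow> set p \<subseteq> E \<Longrightarrow> length p + n = card E \<Longrightarrow>
    q \<in> paths (build V E ends phi n p I) \<Longrightarrow> distinct (p @ q) \<and> set (p @ q) = E"
proof (induction n arbitrary: p I q)
  case 0
  then have "q = []" by simp
  moreover have "card (set p) = card E" using 0(1,3) by (simp add: distinct_card)
  ultimately show ?case using 0(1,2) fin card_subset_eq[of E "set p"] by simp
next
  case (Suc n)
  define e where "e = lab V E ends phi p I"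
  have e: "e \<in> E - set p" unfolding e_def using lab_in[OF om fin] Suc.prems by auto
  from Suc.prems(4) obtain q' where q: "q = e # q'" and
    q': "q' \<in> paths (build V E ends phi n (p @ [e]) I) \<or> q' \<in> paths (build V E ends phi n (p @ [e]) (insert e I))"
    by (auto simp: Let_def e_def)
  have "distinct (p @ [e])" "set (p @ [e]) \<subseteq> E" "length (p @ [e]) + n = card E"
    using e Suc.prems by auto
  then have "distinct ((p @ [e]) @ q') \<and> set ((p @ [e]) @ q') = E" using q' Suc.IH by blast
  then show ?case using q by simp
qed

lemma build_dt:
  assumes om: "order_map V E ends phi" and fin: "finite E"
    and cond: "\<forall>T T'. spanning_tree V E ends T \<longrightarrow> spanning_tree V E ends T' \<longrightarrow>
      (\<forall>k < card E.
        T \<inter> set (take k (phi T)) = T' \<inter> set (take k (phi T)) \<longrightarrow>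
        (\<forall>j\<in>{1..k+1}. phi T ! (j - 1) = phi T' ! (j - 1)))"
  shows "spanning_tree V E ends T \<Longrightarrow> take (length p) (phi T) = p \<Longrightarrow> T \<inter> set p = I \<Longrightarrow>
    length p + n = card E \<Longrightarrow> dt_ordering (build V E ends phi n p I) T = drop (length p) (phi T)"
proof (induction n arbitrary: p I)
  case 0
  have "length (phi T) = card E" using om 0 unfolding order_map_def by (metis distinct_card)
  then show ?case using 0 by simp
next
  case (Suc n)
  let ?k = "length p"
  have d: "distinct (phi T)" "set (phi T) = E" using om Suc.prems unfolding order_map_def by auto
  have len: "length (phi T) = card E" using d distinct_card by fastforce
  have ex: "\<exists>T. spanning_tree V E ends T \<and> take (length p) (phi T) = p \<and> T \<inter> set p = I"
    using Suc.prems by blast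
  define T0 where "T0 = (SOME T. spanning_tree V E ends T \<and> take (length p) (phi T) = p \<and> T \<inter> set p = I)"
  have T0: "spanning_tree V E ends T0 \<and> take (length p) (phi T0) = p \<and> T0 \<inter> set p = I"
    unfolding T0_def by (rule someI_ex[OF ex])
  have kl: "?k < card E" using Suc.prems by simp
  have "phi T0 ! (Suc ?k - 1) = phi T ! (Suc ?k - 1)"
    using cond T0 Suc.prems kl by (metis atLeastAtMost_iff Suc_eq_plus1 le_add2 order_refl)
  then have l: "lab V E ends phi p I = phi T ! ?k" using ex by (simp add: lab_def T0_def)
  define e where "e = phi T ! ?k"
  have tk: "take (length (p @ [e])) (phi T) = p @ [e]"
    using Suc.prems(2) kl len by (simp add: e_def take_Suc_conv_app_nth)
  have dr: "drop ?k (phi T) = e # drop (Suc ?k) (phi T)"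
    using kl len by (simp add: e_def Cons_nth_drop_Suc)
  show ?case
  proof (cases "e \<in> T")
    case True
    have "T \<inter> set (p @ [e]) = insert e I" using True Suc.prems(3) by auto
    then have "dt_ordering (build V E ends phi n (p @ [e]) (insert e I)) T = drop (Suc ?k) (phi T)"
      using Suc.IH[OF Suc.prems(1) tk] Suc.prems(4) by simp
    then show ?thesis using True l dr by (simp add: Let_def e_def)
  next
    case False
    have "T \<inter> set (p @ [e]) = I" using False Suc.prems(3) by auto
    then have "dt_ordering (build V E ends phi n (p @ [e]) I) T = drop (Suc ?k) (phi T)"
      using Suc.IH[OF Suc.prems(1) tk] Suc.prems(4) by simp
    then show ?thesis using False l dr by (simp add: Let_def e_def)
  qed
qed

theorem theorem12p6p1:
  fixes V :: "'v set" and E :: "'e set" and ends :: "'e \<Rightarrow> 'v set"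
    and phi :: "'e set \<Rightarrow> 'e list"
  assumes "graph V E ends" and "connected_graph V E ends" and "E \<noteq> {}"
    and "order_map V E ends phi"
  shows "tree_compatible V E ends phi \<longleftrightarrow>
    (\<forall>T T'. spanning_tree V E ends T \<longrightarrow> spanning_tree V E ends T' \<longrightarrow>
      (\<forall>k < card E.
        T \<inter> set (take k (phi T)) = T' \<inter> set (take k (phi T)) \<longrightarrow>
        (\<forall>j\<in>{1..k+1}. phi T ! (j - 1) = phi T' ! (j - 1))))"
proof
  assume "tree_compatible V E ends phi"
  then obtain t where t: "decision_tree E t"
    and ph: "\<forall>T. spanning_tree V E ends T \<longrightarrow> dt_ordering t T = phi T"
    unfolding tree_compatible_def by blast
  have ct: "complete t" "height t = card E" using t unfolding decision_tree_def by auto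
  show "\<forall>T T'. spanning_tree V E ends T \<longrightarrow> spanning_tree V E ends T' \<longrightarrow>
      (\<forall>k < card E.
        T \<inter> set (take k (phi T)) = T' \<inter> set (take k (phi T)) \<longrightarrow>
        (\<forall>j\<in>{1..k+1}. phi T ! (j - 1) = phi T' ! (j - 1)))"
  proof (intro allI impI ballI)
    fix T T' k j
    assume s: "spanning_tree V E ends T" "spanning_tree V E ends T'" and k: "k < card E"
      and h: "T \<inter> set (take k (phi T)) = T' \<inter> set (take k (phi T))" and j: "j \<in> {1..k+1}"
    have "take (Suc k) (phi T) = take (Suc k) (phi T')"
      using dt_agree[OF ct(1), of k T T'] ct(2) k h ph s by simp
    then have "take (Suc k) (phi T) ! (j - 1) = take (Suc k) (phi T') ! (j - 1)" by simp
    moreover have "j - 1 < Suc k" using j by auto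
    ultimately show "phi T ! (j - 1) = phi T' ! (j - 1)" by simp
  qed
next
  assume cond: "\<forall>T T'. spanning_tree V E ends T \<longrightarrow> spanning_tree V E ends T' \<longrightarrow>
      (\<forall>k < card E.
        T \<inter> set (take k (phi T)) = T' \<inter> set (take k (phi T)) \<longrightarrow>
        (\<forall>j\<in>{1..k+1}. phi T ! (j - 1) = phi T' ! (j - 1)))"
  have fin: "finite E" using assms(1) unfolding graph_def by auto
  let ?t = "build V E ends phi (card E) [] {}"
  have "decision_tree E ?t"
    unfolding decision_tree_def
    using build_complete[of V E ends phi "card E" "[]" "{}"]
      build_paths[OF assms(4) fin, of "[]" "card E"] by auto
  moreover have "\<forall>T. spanning_tree V E ends T \<longrightarrow> dt_ordering ?t T = phi T"
    using build_dt[OF assms(4) fin cond, of _ "[]" "{}" "card E"] by simp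
  ultimately show "tree_compatible V E ends phi" unfolding tree_compatible_def by blast
qed

end
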